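(* Let $d,p\ge1$, $X=(X_1,\dots,X_d)\in\mathbb{R}^d$, $\Sigma$ a symmetric positive definite $d\times d$ matrix with $S=\Sigma^{-1}=(s_{lm})$, and let $h(\mathbf{x})=\sum_{\mathbf{k}\in\Omega}a_{\mathbf{k}}H_{\mathbf{k}}(\mathbf{x})$ with real coefficients $a_{\mathbf{k}}$, where $\Omega=\{\mathbf{k}\in\mathbb{N}^d:|\mathbf{k}|_1\le p\}$. Suppose the real family $(\tilde\varphi_{\mathbf{k}})$ satisfies the recursion system (R) for $(S,X,(a_\mathbf{k}),p)$, and let $C$ be the associated constant defined below. Then $\varphi(\mathbf{x}):=\sum_{\mathbf{k}\in\Omega}\tilde\varphi_{\mathbf{k}}H_{\mathbf{k}}(\mathbf{x})$ satisfies, for all $\mathbf{x}\in\mathbb{R}^d$, $$-(\mathbf{x}-X)^T\Sigma^{-1}\nabla\varphi(\mathbf{x})+\Delta\varphi(\mathbf{x})=-h(\mathbf{x})+C,$$ equivalently $\nabla^T\big(\mathcal{N}(\mathbf{x};X,\Sigma)\nabla\varphi(\mathbf{x})\big)=(-h(\mathbf{x})+C)\,\mathcal{N}(\mathbf{x};X,\Sigma)$.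
   Context: Multi-index notation: $\mathbf{k}=(k_1,\dots,k_d)\in\mathbb{N}^d$, $|\mathbf{k}|_1=\sum_l k_l$, $\mathbf{e}_l$ is the $l$-th standard unit vector. $H_k$ denotes the (physicists') Hermite polynomial of degree $k$ ($H_0=1$, $H_1(x)=2x$, $H_{k+1}(x)=2xH_k(x)-2kH_{k-1}(x)$), and $H_{\mathbf{k}}(\mathbf{x})=\prod_{l=1}^dH_{k_l}(x_l)$. $\mathcal{N}(\mathbf{x};\mu,\Sigma)$ is the Gaussian density with mean $\mu$ and covariance $\Sigma$. Recursion system (R) for $(S,X,(a_\mathbf{k}),p)$, with $S=(s_{lm})$ symmetric: the family $(\tilde\varphi_{\mathbf{k}})_{\mathbf{k}\in\mathbb{Z}^d}$ satisfies $\tilde\varphi_{\mathbf{k}}=0$ whenever $|\mathbf{k}|_1>p$ or some component of $\mathbf{k}$ is negative, and for every $\mathbf{q}\in\mathbb{N}^d$ with $1\le|\mathbf{q}|_1\le p$: $$\sum_{l=1}^d s_{ll}q_l\tilde\varphi_{\mathbf{q}}+\sum_{l\ne m}s_{lm}(q_m+1)\tilde\varphi_{\mathbf{q}+\mathbf{e}_m-\mathbf{e}_l}=a_{\mathbf{q}}+\sum_{l,m=1}^d 2s_{lm}(q_m+1)X_l\tilde\varphi_{\mathbf{q}+\mathbf{e}_m}-\sum_{l\neq m}2s_{lm}(q_m+1)(q_l+1)\tilde\varphi_{\mathbf{q}+\mathbf{e}_m+\mathbf{e}_l}+\sum_{l=1}^d2(2-s_{ll})(q_l+1)(q_l+2)\tilde\varphi_{\mathbf{q}+2\mathbf{e}_l}.$$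 The associated constant is $C:=a_{\mathbf{0}}+\sum_{l,m=1}^d2s_{lm}X_l\tilde\varphi_{\mathbf{e}_m}-\sum_{l\ne m}2s_{lm}\tilde\varphi_{\mathbf{e}_m+\mathbf{e}_l}+\sum_{l=1}^d4(2-s_{ll})\tilde\varphi_{2\mathbf{e}_l}$. ($\tilde\varphi_{\mathbf 0}$ is arbitrary.) *)

theory Defs
  imports "HOL-Analysis.Analysis"
begin

fun hermite :: "nat \<Rightarrow> real \<Rightarrow> real" where
  "hermite 0 x = 1"
| "hermite (Suc 0) x = 2 * x"
| "hermite (Suc (Suc k)) x = 2 * x * hermite (Suc k) x - 2 * real (Suc k) * hermite k x"

definition hermite_multi :: "('n::finite \<Rightarrow> nat) \<Rightarrow> real^'n \<Rightarrow> real" where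
  "hermite_multi k x = (\<Prod>l\<in>UNIV. hermite (k l) (x $ l))"

definition multi_index_set :: "nat \<Rightarrow> ('n::finite \<Rightarrow> nat) set" where
  "multi_index_set p = {k. (\<Sum>l\<in>UNIV. k l) \<le> p}"

definition herm_expansion :: "(('n::finite \<Rightarrow> nat) \<Rightarrow> real) \<Rightarrow> nat \<Rightarrow> real^'n \<Rightarrow> real" where
  "herm_expansion c p x = (\<Sum>k\<in>multi_index_set p. c k * hermite_multi k x)"

definition unit_mi :: "'n \<Rightarrow> 'n \<Rightarrow> int" where
  "unit_mi l = (\<lambda>j. if j = l then 1 else 0)"

definition recursion_system ::
  "real^'n^'n \<Rightarrow> real^'n \<Rightarrow> (('n::finite \<Rightarrow> nat) \<Rightarrow> real) \<Rightarrow> nat \<Rightarrow> (('n \<Rightarrow> int) \<Rightarrow> real) \<Rightarrow> bool" where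
  "recursion_system S X a p phi \<longleftrightarrow>
     (\<forall>k::'n \<Rightarrow> int. ((\<Sum>l\<in>UNIV. k l) > int p \<or> (\<exists>l. k l < 0)) \<longrightarrow> phi k = 0) \<and>
     (\<forall>q::'n \<Rightarrow> nat. 1 \<le> (\<Sum>l\<in>UNIV. q l) \<and> (\<Sum>l\<in>UNIV. q l) \<le> p \<longrightarrow>
        (\<Sum>l\<in>UNIV. S$l$l * real (q l) * phi (\<lambda>j. int (q j)))
        + (\<Sum>l\<in>UNIV. \<Sum>m\<in>UNIV - {l}. S$l$m * real (q m + 1)
              * phi (\<lambda>j. int (q j) + unit_mi m j - unit_mi l j))
        = a q
        + (\<Sum>l\<in>UNIV. \<Sum>m\<in>UNIV. 2 * S$l$m * real (q m + 1) * X$l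
              * phi (\<lambda>j. int (q j) + unit_mi m j))
        - (\<Sum>l\<in>UNIV. \<Sum>m\<in>UNIV - {l}. 2 * S$l$m * real (q m + 1) * real (q l + 1)
              * phi (\<lambda>j. int (q j) + unit_mi m j + unit_mi l j))
        + (\<Sum>l\<in>UNIV. 2 * (2 - S$l$l) * real (q l + 1) * real (q l + 2)
              * phi (\<lambda>j. int (q j) + 2 * unit_mi l j)))"

definition recursion_const ::
  "real^'n^'n \<Rightarrow> real^'n \<Rightarrow> (('n::finite \<Rightarrow> nat) \<Rightarrow> real) \<Rightarrow> (('n \<Rightarrow> int) \<Rightarrow> real) \<Rightarrow> real" where
  "recursion_const S X a phi =
     a (\<lambda>_. 0)
     + (\<Sum>l\<in>UNIV. \<Sum>m\<in>UNIV. 2 * S$l$m * X$l * phi (unit_mi m))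
     - (\<Sum>l\<in>UNIV. \<Sum>m\<in>UNIV - {l}. 2 * S$l$m * phi (\<lambda>j. unit_mi m j + unit_mi l j))
     + (\<Sum>l\<in>UNIV. 4 * (2 - S$l$l) * phi (\<lambda>j. 2 * unit_mi l j))"

definition partial_deriv :: "'n::finite \<Rightarrow> (real^'n \<Rightarrow> real) \<Rightarrow> real^'n \<Rightarrow> real" where
  "partial_deriv i f x = deriv (\<lambda>t. f (x + t *\<^sub>R axis i 1)) 0"

definition laplacian :: "(real^'n::finite \<Rightarrow> real) \<Rightarrow> real^'n \<Rightarrow> real" where
  "laplacian f x = (\<Sum>i\<in>UNIV. partial_deriv i (partial_deriv i f) x)"

definition gaussian_density :: "real^'n::finite \<Rightarrow> real^'n^'n \<Rightarrow> real^'n \<Rightarrow> real" where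
  "gaussian_density X Sig x =
     exp (- (1/2) * ((x - X) \<bullet> (matrix_inv Sig *v (x - X))))
     / sqrt ((2 * pi) ^ CARD('n) * det Sig)"

end

theory Submission
  imports Defs
begin

lemma nat_cases3: obtains "n = 0" | "n = Suc 0" | k where "n = Suc (Suc k)"
  by (metis not0_implies_Suc)

lemma hermite_deriv:
  "(hermite n has_real_derivative (2 * real n * hermite (n - 1) x)) (at x)"
proof (induction n arbitrary: x rule: nat_less_induct)
  case (1 n)
  show ?case
  proof (cases n rule: nat_cases3)
    case 1 then show ?thesis by (simp add: DERIV_const)
  next
    case 2 then show ?thesis by (auto intro!: derivative_eq_intros)
  next
    case (3 k)
    have e: "hermite (Suc (Suc k)) = (\<lambda>x. 2 * x * hermite (Suc k) x - 2 * real (Suc k) * hermite k x)"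
      by (rule ext) simp
    have i1: "\<And>x. (hermite (Suc k) has_real_derivative (2 * real (Suc k) * hermite k x)) (at x)"
      using 1 3 by (metis diff_Suc_1 lessI)
    have i2: "\<And>x. (hermite k has_real_derivative (2 * real k * hermite (k-1) x)) (at x)"
      using 1 3 by (metis less_SucI lessI)
    show ?thesis unfolding 3 e
      apply (rule derivative_eq_intros refl i1 i2)+
      apply (cases k)
       apply (simp add: algebra_simps)
      apply (simp add: algebra_simps)
      done
  qed
qed

lemma hermite_rec: "x * hermite n x = hermite (Suc n) x / 2 + real n * hermite (n - 1) x"
proof (cases n)
  case 0 then show ?thesis by simp
next
  case (Suc m)
  have "hermite (Suc (Suc m)) x = 2 * x * hermite (Suc m) x - 2 * real (Suc m) * hermite m x"
    by (rule hermite.simps(3))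
  then show ?thesis using Suc by (simp add: field_simps)
qed

definition Hz :: "('n::finite \<Rightarrow> int) \<Rightarrow> real^'n \<Rightarrow> real" where
  "Hz k x = (if (\<forall>j. 0 \<le> k j) then hermite_multi (\<lambda>j. nat (k j)) x else 0)"

lemma hm_split:
  "hermite_multi k y = hermite (k i) (y $ i) * (\<Prod>l\<in>UNIV-{i}. hermite (k l) (y $ l))"
  unfolding hermite_multi_def by (simp add: prod.remove)

lemma Hz_deriv:
  "((\<lambda>t. Hz k (x + t *\<^sub>R axis i 1)) has_real_derivative
      (2 * of_int (k i) * Hz (\<lambda>j. k j - unit_mi i j) x)) (at 0)"
proof (cases "\<forall>j. 0 \<le> k j")
  case False
  then obtain j where j: "k j < 0" by (meson not_le)
  have "\<not> (\<forall>j. 0 \<le> k j - unit_mi i j)"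
  proof
    assume "\<forall>j. 0 \<le> k j - unit_mi i j"
    then have "0 \<le> k j - unit_mi i j" by blast
    then show False using j by (simp add: unit_mi_def split: if_splits)
  qed
  moreover have "(\<lambda>t. Hz k (x + t *\<^sub>R axis i 1)) = (\<lambda>t. 0)"
    by (rule ext, unfold Hz_def, rule if_not_P[OF False])
  ultimately show ?thesis by (simp add: Hz_def del: not_all)
next
  case True
  define P where "P = (\<Prod>l\<in>UNIV-{i}. hermite (nat (k l)) (x $ l))"
  have e: "(\<lambda>t. Hz k (x + t *\<^sub>R axis i 1)) = (\<lambda>t. hermite (nat (k i)) (x $ i + t) * P)"
  proof
    fix t
    have "(\<Prod>l\<in>UNIV-{i}. hermite (nat (k l)) ((x + t *\<^sub>R axis i 1) $ l)) = P"
      unfolding P_def by (rule prod.cong) (auto simp: axis_def)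
    then show "Hz k (x + t *\<^sub>R axis i 1) = hermite (nat (k i)) (x $ i + t) * P"
      using True by (simp add: Hz_def hm_split[of _ _ i] axis_def)
  qed
  have d: "((\<lambda>t. hermite (nat (k i)) (x $ i + t) * P) has_real_derivative
      (2 * real (nat (k i)) * hermite (nat (k i) - 1) (x $ i) * P)) (at 0)"
  proof -
    have "((\<lambda>t. x $ i + t) has_real_derivative 1) (at 0)"
      by (auto intro!: derivative_eq_intros)
    from DERIV_chain'[OF this hermite_deriv[of "nat (k i)"]]
    show ?thesis by (auto intro!: derivative_eq_intros)
  qed
  show ?thesis
  proof (cases "k i = 0")
    case True
    then show ?thesis using d unfolding e by simp
  next
    case False
    then have ki: "k i \<ge> 1" using \<open>\<forall>j. 0 \<le> k j\<close> by (metis int_one_le_iff_zero_less order_le_less)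
    have nn: "\<forall>j. 0 \<le> k j - unit_mi i j" using True ki by (auto simp: unit_mi_def)
    have "(\<Prod>l\<in>UNIV-{i}. hermite (nat (k l - unit_mi i l)) (x $ l)) = P"
      unfolding P_def by (rule prod.cong) (auto simp: unit_mi_def)
    then have "Hz (\<lambda>j. k j - unit_mi i j) x = hermite (nat (k i) - 1) (x $ i) * P"
      using nn ki by (simp add: Hz_def hm_split[of _ _ i] unit_mi_def nat_diff_distrib)
    then show ?thesis using d ki unfolding e by (simp add: mult.assoc)
  qed
qed

lemma line_deriv_sum:
  "((\<lambda>t. \<Sum>k\<in>B. c k * Hz (\<sigma> k) (x + t *\<^sub>R axis i 1)) has_real_derivative
     (\<Sum>k\<in>B. (c k * (2 * of_int (\<sigma> k i))) * Hz (\<lambda>j. \<sigma> k j - unit_mi i j) x)) (at 0)"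
  by (rule DERIV_sum, rule DERIV_cmult[THEN DERIV_cong], rule Hz_deriv) (simp add: algebra_simps)

lemma pd_sum:
  "partial_deriv i (\<lambda>y. \<Sum>k\<in>B. c k * Hz (\<sigma> k) y) x =
     (\<Sum>k\<in>B. (c k * (2 * of_int (\<sigma> k i))) * Hz (\<lambda>j. \<sigma> k j - unit_mi i j) x)"
  unfolding partial_deriv_def by (rule DERIV_imp_deriv, rule line_deriv_sum)

lemma Hz_mul:
  assumes "\<forall>j. 0 \<le> k j"
  shows "x $ l * Hz k x = Hz (\<lambda>j. k j + unit_mi l j) x / 2 + of_int (k l) * Hz (\<lambda>j. k j - unit_mi l j) x"
proof -
  define P where "P = (\<Prod>m\<in>UNIV-{l}. hermite (nat (k m)) (x $ m))"
  have nn: "\<forall>j. 0 \<le> k j + unit_mi l j" using assms by (simp add: unit_mi_def)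
  have "(\<Prod>m\<in>UNIV-{l}. hermite (nat (k m + unit_mi l m)) (x $ m)) = P"
    unfolding P_def by (rule prod.cong) (auto simp: unit_mi_def)
  then have h1: "Hz (\<lambda>j. k j + unit_mi l j) x = hermite (Suc (nat (k l))) (x $ l) * P"
    using nn assms by (simp add: Hz_def hm_split[of _ _ l] unit_mi_def nat_add_distrib)
  have h0: "Hz k x = hermite (nat (k l)) (x $ l) * P"
    using assms by (simp add: Hz_def hm_split[of _ _ l] P_def)
  have h2: "of_int (k l) * Hz (\<lambda>j. k j - unit_mi l j) x = real (nat (k l)) * hermite (nat (k l) - 1) (x $ l) * P"
  proof (cases "k l = 0")
    case True then show ?thesis by simp
  next
    case False
    then have ki: "k l \<ge> 1" using assms by (metis int_one_le_iff_zero_less order_le_less)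
    have nn: "\<forall>j. 0 \<le> k j - unit_mi l j" using assms ki by (auto simp: unit_mi_def)
    have "(\<Prod>m\<in>UNIV-{l}. hermite (nat (k m - unit_mi l m)) (x $ m)) = P"
      unfolding P_def by (rule prod.cong) (auto simp: unit_mi_def)
    then show ?thesis using nn ki by (simp add: Hz_def hm_split[of _ _ l] unit_mi_def nat_diff_distrib)
  qed
  show ?thesis unfolding h0 h1 h2 using hermite_rec[of "x $ l" "nat (k l)"]
    by (simp add: algebra_simps)
qed

definition Bx :: "nat \<Rightarrow> ('n::finite \<Rightarrow> int) set" where
  "Bx p = {k. \<forall>j. -3 \<le> k j \<and> k j \<le> int p + 3}"

lemma Bx_I: "(\<And>j. -3 \<le> k j \<and> k j \<le> int p + 3) \<Longrightarrow> k \<in> Bx p"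
  by (simp add: Bx_def)

lemma finite_Bx: "finite (Bx p :: ('n::finite \<Rightarrow> int) set)"
proof -
  have "Bx p = (PiE UNIV (\<lambda>_. {-3..int p + 3}) :: ('n \<Rightarrow> int) set)"
    by (auto simp: Bx_def PiE_def Pi_def extensional_def)
  then show ?thesis by (simp add: finite_PiE)
qed

lemma sum_shift_phi:
  fixes phi :: "('n::finite \<Rightarrow> int) \<Rightarrow> real"
  assumes supp: "\<forall>k. phi k \<noteq> 0 \<longrightarrow> (\<forall>j. 0 \<le> k j \<and> k j \<le> int p)"
    and v: "\<forall>j. \<bar>v j\<bar> \<le> 3"
  shows "(\<Sum>k\<in>Bx p. phi k * G k) = (\<Sum>q\<in>Bx p. phi (\<lambda>j. q j + v j) * G (\<lambda>j. q j + v j))"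
proof -
  define F where "F k = phi k * G k" for k
  define \<tau> where "\<tau> q = (\<lambda>j. q j + v j)" for q :: "'n \<Rightarrow> int"
  have inj: "inj \<tau>"
  proof (rule injI)
    fix a b assume "\<tau> a = \<tau> b"
    then have "\<And>j. a j + v j = b j + v j" unfolding \<tau>_def by metis
    then show "a = b" by (intro ext) simp
  qed
  have s1: "\<And>k. F k \<noteq> 0 \<Longrightarrow> k \<in> Bx p"
  proof -
    fix k assume "F k \<noteq> 0"
    then have "\<forall>j. 0 \<le> k j \<and> k j \<le> int p" using supp unfolding F_def by auto
    then show "k \<in> Bx p"
    proof (intro Bx_I)
      fix j assume "\<forall>j. 0 \<le> k j \<and> k j \<le> int p"
      then have "0 \<le> k j \<and> k j \<le> int p" by blast
      then show "-3 \<le> k j \<and> k j \<le> int p + 3" by linarith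
    qed
  qed
  have s2: "\<And>q. F (\<tau> q) \<noteq> 0 \<Longrightarrow> q \<in> Bx p"
  proof -
    fix q assume "F (\<tau> q) \<noteq> 0"
    then have "\<forall>j. 0 \<le> q j + v j \<and> q j + v j \<le> int p" using supp unfolding F_def \<tau>_def by auto
    then show "q \<in> Bx p"
    proof (intro Bx_I)
      fix j assume "\<forall>j. 0 \<le> q j + v j \<and> q j + v j \<le> int p"
      then have "0 \<le> q j + v j \<and> q j + v j \<le> int p" by blast
      moreover have "\<bar>v j\<bar> \<le> 3" using v by blast
      ultimately show "-3 \<le> q j \<and> q j \<le> int p + 3" by linarith
    qed
  qed
  have "(\<Sum>q\<in>Bx p. F (\<tau> q)) = sum F (\<tau> ` Bx p)"
    using inj by (simp add: sum.reindex inj_on_subset)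
  also have "\<dots> = sum F (Bx p \<inter> \<tau> ` Bx p)"
  proof (rule sum.mono_neutral_right)
    show "finite (\<tau> ` Bx p)" by (simp add: finite_Bx)
    show "\<forall>i\<in>\<tau> ` Bx p - Bx p \<inter> \<tau> ` Bx p. F i = 0" using s1 by blast
  qed blast
  also have "\<dots> = sum F (Bx p)"
  proof (rule sum.mono_neutral_left)
    show "\<forall>i\<in>Bx p - Bx p \<inter> \<tau> ` Bx p. F i = 0"
    proof
      fix k assume k: "k \<in> Bx p - Bx p \<inter> \<tau> ` Bx p"
      show "F k = 0"
      proof (rule ccontr)
        assume k2: "F k \<noteq> 0"
        define q where "q = (\<lambda>j. k j - v j)"
        have e: "\<tau> q = k" unfolding q_def \<tau>_def by simp
        then have "q \<in> Bx p" using s2 k2 by blast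
        then have "k \<in> \<tau> ` Bx p" using e by blast
        then show False using k by blast
      qed
    qed
  qed (auto simp: finite_Bx)
  finally show ?thesis unfolding F_def \<tau>_def by simp
qed

lemma herm_Bx:
  fixes c :: "('n::finite \<Rightarrow> nat) \<Rightarrow> real"
  shows
  "herm_expansion c p y = (\<Sum>k\<in>Bx p. (if (\<forall>j. 0 \<le> k j) \<and> (\<Sum>l\<in>UNIV. k l) \<le> int p
        then c (\<lambda>j. nat (k j)) else 0) * Hz k y)"
proof -
  define \<iota> where "\<iota> k = (\<lambda>j. int (k j))" for k :: "'n \<Rightarrow> nat"
  have inj: "inj \<iota>"
  proof (rule injI)
    fix a b assume "\<iota> a = \<iota> b"
    then have "\<And>j. int (a j) = int (b j)" unfolding \<iota>_def by metis
    then show "a = b" by (intro ext) simp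
  qed
  define Oz where "Oz = \<iota> ` multi_index_set p"
  have Oz: "Oz = {k. (\<forall>j. 0 \<le> k j) \<and> (\<Sum>l\<in>UNIV. k l) \<le> int p}"
  proof (intro set_eqI iffI)
    fix k assume "k \<in> Oz"
    then obtain n where "k = \<iota> n" "(\<Sum>l\<in>UNIV. n l) \<le> p"
      unfolding Oz_def multi_index_set_def by auto
    then show "k \<in> {k. (\<forall>j. 0 \<le> k j) \<and> (\<Sum>l\<in>UNIV. k l) \<le> int p}"
      unfolding \<iota>_def by (simp flip: of_nat_sum)
  next
    fix k :: "'n \<Rightarrow> int" assume "k \<in> {k. (\<forall>j. 0 \<le> k j) \<and> (\<Sum>l\<in>UNIV. k l) \<le> int p}"
    then have k: "\<forall>j. 0 \<le> k j" "(\<Sum>l\<in>UNIV. k l) \<le> int p" by auto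
    define n where "n = (\<lambda>j. nat (k j))"
    have kn: "k = \<iota> n" using k unfolding n_def \<iota>_def by auto
    have "int (\<Sum>l\<in>UNIV. n l) \<le> int p" using k kn unfolding \<iota>_def by (simp add: of_nat_sum)
    then have "(\<Sum>l\<in>UNIV. n l) \<le> p" by linarith
    then show "k \<in> Oz" unfolding Oz_def multi_index_set_def kn by auto
  qed
  have OzB: "Oz \<subseteq> Bx p"
  proof
    fix k assume "k \<in> Oz"
    then have k: "\<forall>j. 0 \<le> k j" "(\<Sum>l\<in>UNIV. k l) \<le> int p" using Oz by auto
    have "\<And>j. k j \<le> (\<Sum>l\<in>UNIV. k l)" by (rule member_le_sum) (use k in auto)
    then show "k \<in> Bx p" using k by (intro Bx_I) (smt (verit))
  qed
  have "herm_expansion c p y = (\<Sum>k\<in>multi_index_set p. c k * hermite_multi k y)"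
    by (simp add: herm_expansion_def)
  also have "\<dots> = (\<Sum>k\<in>Oz. c (\<lambda>j. nat (k j)) * Hz k y)"
    unfolding Oz_def by (subst sum.reindex[OF inj_on_subset[OF inj subset_UNIV]]) (simp add: \<iota>_def Hz_def)
  also have "\<dots> = (\<Sum>k\<in>Oz. (if (\<forall>j. 0 \<le> k j) \<and> (\<Sum>l\<in>UNIV. k l) \<le> int p
        then c (\<lambda>j. nat (k j)) else 0) * Hz k y)"
    by (rule sum.cong) (auto simp: Oz)
  also have "\<dots> = (\<Sum>k\<in>Bx p. (if (\<forall>j. 0 \<le> k j) \<and> (\<Sum>l\<in>UNIV. k l) \<le> int p
        then c (\<lambda>j. nat (k j)) else 0) * Hz k y)"
    by (rule sum.mono_neutral_left) (use OzB in \<open>auto simp: finite_Bx Oz\<close>)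
  finally show ?thesis .
qed

lemma R_neg: "recursion_system S X a p phi \<Longrightarrow> k j < 0 \<Longrightarrow> phi k = 0"
  unfolding recursion_system_def by blast

lemma R_big: "recursion_system S X a p phi \<Longrightarrow> (\<Sum>l\<in>UNIV. k l) > int p \<Longrightarrow> phi k = 0"
  unfolding recursion_system_def by blast

lemma R_supp:
  assumes R: "recursion_system S X a p phi"
  shows "\<forall>k. phi k \<noteq> 0 \<longrightarrow> (\<forall>j. 0 \<le> k j \<and> k j \<le> int p)"
proof (intro allI impI)
  fix k j assume nz: "phi k \<noteq> 0"
  have nn: "\<forall>j. 0 \<le> k j" using R_neg[OF R, of k] nz by (meson not_le)
  have s: "(\<Sum>l\<in>UNIV. k l) \<le> int p" using R_big[OF R, of k] nz by (meson not_le)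
  have "k j \<le> (\<Sum>l\<in>UNIV. k l)" by (rule member_le_sum) (use nn in auto)
  then show "0 \<le> k j \<and> k j \<le> int p" using nn s by auto
qed

lemma shift_Hz:
  assumes supp: "\<forall>k. phi k \<noteq> 0 \<longrightarrow> (\<forall>j. 0 \<le> k j \<and> k j \<le> int p)"
    and v: "\<forall>j. \<bar>v j\<bar> \<le> 3"
  shows "(\<Sum>k\<in>Bx p. phi k * (c k * Hz (\<lambda>j. k j - v j) x)) =
         (\<Sum>q\<in>Bx p. phi (\<lambda>j. q j + v j) * (c (\<lambda>j. q j + v j) * Hz q x))"
  using sum_shift_phi[OF supp v, of "\<lambda>k. c k * Hz (\<lambda>j. k j - v j) x"] by simp

lemma xmul:
  assumes supp: "\<forall>k. phi k \<noteq> 0 \<longrightarrow> (\<forall>j. 0 \<le> k j \<and> k j \<le> int p)"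
  shows "(x$l - X$l) * S$l$m * ((phi k * (2 * of_int (k m))) * Hz (\<lambda>j. k j - unit_mi m j) x) =
     phi k * (S$l$m * of_int (k m) * Hz (\<lambda>j. k j - (unit_mi m j - unit_mi l j)) x)
   + phi k * (2 * S$l$m * of_int (k m) * of_int (k l - unit_mi m l) * Hz (\<lambda>j. k j - (unit_mi m j + unit_mi l j)) x)
   - phi k * (2 * X$l * S$l$m * of_int (k m) * Hz (\<lambda>j. k j - unit_mi m j) x)"
proof (cases "phi k = 0 \<or> k m = 0")
  case True then show ?thesis by auto
next
  case False
  then have nn: "\<forall>j. 0 \<le> k j" and km: "k m \<ge> 1" using supp by (auto, smt (verit))
  have nn': "\<forall>j. 0 \<le> k j - unit_mi m j" using nn km by (simp add: unit_mi_def)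
  have e1: "(\<lambda>j. k j - unit_mi m j + unit_mi l j) = (\<lambda>j. k j - (unit_mi m j - unit_mi l j))"
    by (rule ext) simp
  have e2: "(\<lambda>j. k j - unit_mi m j - unit_mi l j) = (\<lambda>j. k j - (unit_mi m j + unit_mi l j))"
    by (rule ext) simp
  have hm: "x $ l * Hz (\<lambda>j. k j - unit_mi m j) x = Hz (\<lambda>j. k j - (unit_mi m j - unit_mi l j)) x / 2
      + of_int (k l - unit_mi m l) * Hz (\<lambda>j. k j - (unit_mi m j + unit_mi l j)) x"
    using Hz_mul[OF nn', of x l] unfolding e1 e2 by simp
  have "(x$l - X$l) * S$l$m * ((phi k * (2 * of_int (k m))) * Hz (\<lambda>j. k j - unit_mi m j) x)
     = 2 * S$l$m * phi k * of_int (k m) * (x $ l * Hz (\<lambda>j. k j - unit_mi m j) x)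
       - phi k * (2 * X$l * S$l$m * of_int (k m) * Hz (\<lambda>j. k j - unit_mi m j) x)"
    by (simp add: algebra_simps)
  then show ?thesis unfolding hm by (simp add: algebra_simps)
qed

lemma swap3: "(\<Sum>l\<in>A. \<Sum>m\<in>C. \<Sum>q\<in>D. f l m q) = (\<Sum>q\<in>D. \<Sum>l\<in>A. \<Sum>m\<in>C. f l m q)"
proof -
  have "(\<Sum>l\<in>A. \<Sum>m\<in>C. \<Sum>q\<in>D. f l m q) = (\<Sum>l\<in>A. \<Sum>q\<in>D. \<Sum>m\<in>C. f l m q)"
    by (rule sum.cong[OF refl], rule sum.swap)
  also have "\<dots> = (\<Sum>q\<in>D. \<Sum>l\<in>A. \<Sum>m\<in>C. f l m q)" by (rule sum.swap)
  finally show ?thesis .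
qed

lemma regroup:
  fixes H :: real
  shows "-(\<Sum>l\<in>A. \<Sum>m\<in>C. f1 l m * (g1 l m * H) + f2 l m * (g2 l m * H) - f3 l m * (g3 l m * H))
     + (\<Sum>l\<in>A. f4 l * (g4 l * H))
   = (\<Sum>l\<in>A. -(\<Sum>m\<in>C. f1 l m * g1 l m + f2 l m * g2 l m - f3 l m * g3 l m) + f4 l * g4 l) * H"
  by (simp add: sum_distrib_right sum_distrib_left sum.distrib sum_subtractf algebra_simps)

lemma negadd: "-(sum A D) + sum C D = (\<Sum>q\<in>D. -(A q) + (C q :: real))"
  by (simp add: sum.distrib sum_negf sum_subtractf)

lemma main1:
  fixes S :: "real^'n::finite^'n" and X :: "real^'n" and phi :: "('n \<Rightarrow> int) \<Rightarrow> real"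
  assumes R: "recursion_system S X a p phi"
  shows "- (\<Sum>l\<in>UNIV. \<Sum>m\<in>UNIV. (x$l - X$l) * S$l$m
          * partial_deriv m (herm_expansion (\<lambda>k. phi (\<lambda>j. int (k j))) p) x)
     + laplacian (herm_expansion (\<lambda>k. phi (\<lambda>j. int (k j))) p) x
     = (\<Sum>q\<in>Bx p. (\<Sum>l\<in>UNIV.
          - (\<Sum>m\<in>UNIV. phi (\<lambda>j. q j + (unit_mi m j - unit_mi l j)) * (S$l$m * of_int (q m + (unit_mi m m - unit_mi l m)))
             + phi (\<lambda>j. q j + (unit_mi m j + unit_mi l j)) * (2 * S$l$m * of_int (q m + (unit_mi m m + unit_mi l m)) * of_int (q l + (unit_mi m l + unit_mi l l) - unit_mi m l))
             - phi (\<lambda>j. q j + unit_mi m j) * (2 * X$l * S$l$m * of_int (q m + unit_mi m m)))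
          + phi (\<lambda>j. q j + 2 * unit_mi l j) * (2 * of_int (q l + 2 * unit_mi l l) * (2 * of_int (q l + 2 * unit_mi l l - 1))))
        * Hz q x)"
proof -
  define B where "B = (Bx p :: ('n \<Rightarrow> int) set)"
  define \<phi> where "\<phi> = herm_expansion (\<lambda>k. phi (\<lambda>j. int (k j))) p"
  have supp: "\<forall>k. phi k \<noteq> 0 \<longrightarrow> (\<forall>j. 0 \<le> k j \<and> k j \<le> int p)" by (rule R_supp[OF R])
  have phiexp: "\<phi> = (\<lambda>y. \<Sum>k\<in>B. phi k * Hz k y)"
  proof
    fix y
    show "\<phi> y = (\<Sum>k\<in>B. phi k * Hz k y)"
      unfolding \<phi>_def herm_Bx B_def
    proof (rule sum.cong[OF refl])
      fix k :: "'n \<Rightarrow> int"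
      show "(if (\<forall>j. 0 \<le> k j) \<and> (\<Sum>l\<in>UNIV. k l) \<le> int p then phi (\<lambda>j. int (nat (k j))) else 0) * Hz k y
          = phi k * Hz k y"
      proof (cases "\<forall>j. 0 \<le> k j")
        case True
        then have "(\<lambda>j. int (nat (k j))) = k" by auto
        then show ?thesis using True R_big[OF R, of k] by auto
      next
        case False then show ?thesis unfolding Hz_def by (simp del: not_all)
      qed
    qed
  qed
  have d1: "\<And>m. partial_deriv m \<phi> = (\<lambda>y. \<Sum>k\<in>B. (phi k * (2 * of_int (k m))) * Hz (\<lambda>j. k j - unit_mi m j) y)"
    unfolding phiexp using pd_sum[where B=B and c=phi and \<sigma>="\<lambda>k. k"] by (intro ext) simp
  have d2: "\<And>i. partial_deriv i (partial_deriv i \<phi>) x =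
     (\<Sum>k\<in>B. phi k * ((2 * of_int (k i) * (2 * of_int (k i - 1))) * Hz (\<lambda>j. k j - 2 * unit_mi i j) x))"
  proof -
    fix i
    have "partial_deriv i (partial_deriv i \<phi>) x = (\<Sum>k\<in>B. (phi k * (2 * of_int (k i)) * (2 * of_int (k i - unit_mi i i))) * Hz (\<lambda>j. k j - unit_mi i j - unit_mi i j) x)"
      unfolding d1 using pd_sum[where i=i and B=B and c="\<lambda>k. phi k * (2 * of_int (k i))" and \<sigma>="\<lambda>k j. k j - unit_mi i j" and x=x] by simp
    also have "\<dots> = (\<Sum>k\<in>B. phi k * ((2 * of_int (k i) * (2 * of_int (k i - 1))) * Hz (\<lambda>j. k j - 2 * unit_mi i j) x))"
    proof (rule sum.cong[OF refl])
      fix k :: "'n \<Rightarrow> int"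
      have "(\<lambda>j. k j - unit_mi i j - unit_mi i j) = (\<lambda>j. k j - 2 * unit_mi i j)" by (rule ext) simp
      then show "(phi k * (2 * of_int (k i)) * (2 * of_int (k i - unit_mi i i))) * Hz (\<lambda>j. k j - unit_mi i j - unit_mi i j) x
        = phi k * ((2 * of_int (k i) * (2 * of_int (k i - 1))) * Hz (\<lambda>j. k j - 2 * unit_mi i j) x)"
        by (simp add: unit_mi_def)
    qed
    finally show "?thesis i" .
  qed
  define P1 where "P1 l m = (\<Sum>q\<in>B. phi (\<lambda>j. q j + (unit_mi m j - unit_mi l j)) * (S$l$m * of_int (q m + (unit_mi m m - unit_mi l m)) * Hz q x))" for l m
  define P2 where "P2 l m = (\<Sum>q\<in>B. phi (\<lambda>j. q j + (unit_mi m j + unit_mi l j)) * (2 * S$l$m * of_int (q m + (unit_mi m m + unit_mi l m)) * of_int (q l + (unit_mi m l + unit_mi l l) - unit_mi m l) * Hz q x))" for l m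
  define P3 where "P3 l m = (\<Sum>q\<in>B. phi (\<lambda>j. q j + unit_mi m j) * (2 * X$l * S$l$m * of_int (q m + unit_mi m m) * Hz q x))" for l m
  define P4 where "P4 l = (\<Sum>q\<in>B. phi (\<lambda>j. q j + 2 * unit_mi l j) * ((2 * of_int (q l + 2 * unit_mi l l) * (2 * of_int (q l + 2 * unit_mi l l - 1))) * Hz q x))" for l
  have T1: "(x$l - X$l) * S$l$m * partial_deriv m \<phi> x = P1 l m + P2 l m - P3 l m" for l m
  proof -
    have "(x$l - X$l) * S$l$m * partial_deriv m \<phi> x =
       (\<Sum>k\<in>B. (x$l - X$l) * S$l$m * ((phi k * (2 * of_int (k m))) * Hz (\<lambda>j. k j - unit_mi m j) x))"
      by (simp add: d1 sum_distrib_left)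
    also have "\<dots> = (\<Sum>k\<in>B. phi k * (S$l$m * of_int (k m) * Hz (\<lambda>j. k j - (unit_mi m j - unit_mi l j)) x)
       + phi k * (2 * S$l$m * of_int (k m) * of_int (k l - unit_mi m l) * Hz (\<lambda>j. k j - (unit_mi m j + unit_mi l j)) x)
       - phi k * (2 * X$l * S$l$m * of_int (k m) * Hz (\<lambda>j. k j - unit_mi m j) x))"
      by (rule sum.cong[OF refl xmul[OF supp]])
    also have "\<dots> = (\<Sum>k\<in>B. phi k * (S$l$m * of_int (k m) * Hz (\<lambda>j. k j - (unit_mi m j - unit_mi l j)) x))
       + (\<Sum>k\<in>B. phi k * (2 * S$l$m * of_int (k m) * of_int (k l - unit_mi m l) * Hz (\<lambda>j. k j - (unit_mi m j + unit_mi l j)) x))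
       - (\<Sum>k\<in>B. phi k * (2 * X$l * S$l$m * of_int (k m) * Hz (\<lambda>j. k j - unit_mi m j) x))"
      by (simp only: sum.distrib sum_subtractf)
    also have "\<dots> = P1 l m + P2 l m - P3 l m"
    proof -
      have s1: "(\<Sum>k\<in>B. phi k * (S$l$m * of_int (k m) * Hz (\<lambda>j. k j - (unit_mi m j - unit_mi l j)) x)) = P1 l m"
        unfolding P1_def B_def by (rule shift_Hz[OF supp]) (simp add: unit_mi_def)
      have s2: "(\<Sum>k\<in>B. phi k * (2 * S$l$m * of_int (k m) * of_int (k l - unit_mi m l) * Hz (\<lambda>j. k j - (unit_mi m j + unit_mi l j)) x)) = P2 l m"
        unfolding P2_def B_def by (rule shift_Hz[OF supp]) (simp add: unit_mi_def)
      have s3: "(\<Sum>k\<in>B. phi k * (2 * X$l * S$l$m * of_int (k m) * Hz (\<lambda>j. k j - unit_mi m j) x)) = P3 l m"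
        unfolding P3_def B_def by (rule shift_Hz[OF supp]) (simp add: unit_mi_def)
      show ?thesis by (simp only: s1 s2 s3)
    qed
    finally show ?thesis .
  qed
  have T4: "partial_deriv i (partial_deriv i \<phi>) x = P4 i" for i
    unfolding d2 P4_def B_def by (rule shift_Hz[OF supp]) (simp add: unit_mi_def)
  have "- (\<Sum>l\<in>UNIV. \<Sum>m\<in>UNIV. (x$l - X$l) * S$l$m * partial_deriv m \<phi> x) + laplacian \<phi> x
      = - (\<Sum>l\<in>UNIV. \<Sum>m\<in>UNIV. P1 l m + P2 l m - P3 l m) + (\<Sum>l\<in>UNIV. P4 l)"
    by (simp add: T1 T4 laplacian_def)
  also have "\<dots> = - (\<Sum>l\<in>UNIV. \<Sum>m\<in>UNIV. \<Sum>q\<in>B.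
        phi (\<lambda>j. q j + (unit_mi m j - unit_mi l j)) * (S$l$m * of_int (q m + (unit_mi m m - unit_mi l m)) * Hz q x)
      + phi (\<lambda>j. q j + (unit_mi m j + unit_mi l j)) * (2 * S$l$m * of_int (q m + (unit_mi m m + unit_mi l m)) * of_int (q l + (unit_mi m l + unit_mi l l) - unit_mi m l) * Hz q x)
      - phi (\<lambda>j. q j + unit_mi m j) * (2 * X$l * S$l$m * of_int (q m + unit_mi m m) * Hz q x))
      + (\<Sum>l\<in>UNIV. \<Sum>q\<in>B. phi (\<lambda>j. q j + 2 * unit_mi l j) * ((2 * of_int (q l + 2 * unit_mi l l) * (2 * of_int (q l + 2 * unit_mi l l - 1))) * Hz q x))"
    unfolding P1_def P2_def P3_def P4_def by (simp only: sum.distrib sum_subtractf)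
  also have "\<dots> = - (\<Sum>q\<in>B. \<Sum>l\<in>UNIV. \<Sum>m\<in>UNIV.
        phi (\<lambda>j. q j + (unit_mi m j - unit_mi l j)) * (S$l$m * of_int (q m + (unit_mi m m - unit_mi l m)) * Hz q x)
      + phi (\<lambda>j. q j + (unit_mi m j + unit_mi l j)) * (2 * S$l$m * of_int (q m + (unit_mi m m + unit_mi l m)) * of_int (q l + (unit_mi m l + unit_mi l l) - unit_mi m l) * Hz q x)
      - phi (\<lambda>j. q j + unit_mi m j) * (2 * X$l * S$l$m * of_int (q m + unit_mi m m) * Hz q x))
      + (\<Sum>q\<in>B. \<Sum>l\<in>UNIV. phi (\<lambda>j. q j + 2 * unit_mi l j) * ((2 * of_int (q l + 2 * unit_mi l l) * (2 * of_int (q l + 2 * unit_mi l l - 1))) * Hz q x))"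
    by (subst swap3, subst sum.swap[of _ UNIV B], rule refl)
  also have "\<dots> = (\<Sum>q\<in>B. (\<Sum>l\<in>UNIV.
          - (\<Sum>m\<in>UNIV. phi (\<lambda>j. q j + (unit_mi m j - unit_mi l j)) * (S$l$m * of_int (q m + (unit_mi m m - unit_mi l m)))
             + phi (\<lambda>j. q j + (unit_mi m j + unit_mi l j)) * (2 * S$l$m * of_int (q m + (unit_mi m m + unit_mi l m)) * of_int (q l + (unit_mi m l + unit_mi l l) - unit_mi m l))
             - phi (\<lambda>j. q j + unit_mi m j) * (2 * X$l * S$l$m * of_int (q m + unit_mi m m)))
          + phi (\<lambda>j. q j + 2 * unit_mi l j) * (2 * of_int (q l + 2 * unit_mi l l) * (2 * of_int (q l + 2 * unit_mi l l - 1))))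
        * Hz q x)"
    by (subst negadd, rule sum.cong[OF refl regroup])
  finally show ?thesis unfolding \<phi>_def B_def .
qed

definition CR :: "real^'n^'n \<Rightarrow> real^'n \<Rightarrow> (('n::finite \<Rightarrow> int) \<Rightarrow> real) \<Rightarrow> ('n \<Rightarrow> int) \<Rightarrow> real" where
  "CR S X phi q = (\<Sum>l\<in>UNIV.
          - (\<Sum>m\<in>UNIV. phi (\<lambda>j. q j + (unit_mi m j - unit_mi l j)) * (S$l$m * of_int (q m + (unit_mi m m - unit_mi l m)))
             + phi (\<lambda>j. q j + (unit_mi m j + unit_mi l j)) * (2 * S$l$m * of_int (q m + (unit_mi m m + unit_mi l m)) * of_int (q l + (unit_mi m l + unit_mi l l) - unit_mi m l))
             - phi (\<lambda>j. q j + unit_mi m j) * (2 * X$l * S$l$m * of_int (q m + unit_mi m m)))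
          + phi (\<lambda>j. q j + 2 * unit_mi l j) * (2 * of_int (q l + 2 * unit_mi l l) * (2 * of_int (q l + 2 * unit_mi l l - 1))))"

lemma CR_l:
  fixes S :: "real^'n::finite^'n"
  shows "- (\<Sum>m\<in>UNIV. phi (\<lambda>j. q j + (unit_mi m j - unit_mi l j)) * (S$l$m * of_int (q m + (unit_mi m m - unit_mi l m)))
             + phi (\<lambda>j. q j + (unit_mi m j + unit_mi l j)) * (2 * S$l$m * of_int (q m + (unit_mi m m + unit_mi l m)) * of_int (q l + (unit_mi m l + unit_mi l l) - unit_mi m l))
             - phi (\<lambda>j. q j + unit_mi m j) * (2 * X$l * S$l$m * of_int (q m + unit_mi m m)))
          + phi (\<lambda>j. q j + 2 * unit_mi l j) * (2 * of_int (q l + 2 * unit_mi l l) * (2 * of_int (q l + 2 * unit_mi l l - 1)))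
   = - (S$l$l * of_int (q l) * phi q
        + (\<Sum>m\<in>UNIV - {l}. S$l$m * of_int (q m + 1) * phi (\<lambda>j. q j + unit_mi m j - unit_mi l j)))
     + ((\<Sum>m\<in>UNIV. 2 * S$l$m * of_int (q m + 1) * X$l * phi (\<lambda>j. q j + unit_mi m j))
        - (\<Sum>m\<in>UNIV - {l}. 2 * S$l$m * of_int (q m + 1) * of_int (q l + 1) * phi (\<lambda>j. q j + unit_mi m j + unit_mi l j))
        + 2 * (2 - S$l$l) * of_int (q l + 1) * of_int (q l + 2) * phi (\<lambda>j. q j + 2 * unit_mi l j))"
proof -
  have e1: "(\<Sum>m\<in>UNIV. phi (\<lambda>j. q j + (unit_mi m j - unit_mi l j)) * (S$l$m * of_int (q m + (unit_mi m m - unit_mi l m))))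
     = S$l$l * of_int (q l) * phi q + (\<Sum>m\<in>UNIV - {l}. S$l$m * of_int (q m + 1) * phi (\<lambda>j. q j + unit_mi m j - unit_mi l j))"
  proof -
    have "(\<Sum>m\<in>UNIV - {l}. phi (\<lambda>j. q j + (unit_mi m j - unit_mi l j)) * (S$l$m * of_int (q m + (unit_mi m m - unit_mi l m))))
       = (\<Sum>m\<in>UNIV - {l}. S$l$m * of_int (q m + 1) * phi (\<lambda>j. q j + unit_mi m j - unit_mi l j))"
      by (rule sum.cong) (auto simp: unit_mi_def add_diff_eq)
    then show ?thesis by (simp add: sum.remove[of UNIV l])
  qed
  have e2: "(\<Sum>m\<in>UNIV. phi (\<lambda>j. q j + (unit_mi m j + unit_mi l j)) * (2 * S$l$m * of_int (q m + (unit_mi m m + unit_mi l m)) * of_int (q l + (unit_mi m l + unit_mi l l) - unit_mi m l)))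
     = 2 * S$l$l * of_int (q l + 2) * of_int (q l + 1) * phi (\<lambda>j. q j + 2 * unit_mi l j)
       + (\<Sum>m\<in>UNIV - {l}. 2 * S$l$m * of_int (q m + 1) * of_int (q l + 1) * phi (\<lambda>j. q j + unit_mi m j + unit_mi l j))"
  proof -
    have "(\<Sum>m\<in>UNIV - {l}. phi (\<lambda>j. q j + (unit_mi m j + unit_mi l j)) * (2 * S$l$m * of_int (q m + (unit_mi m m + unit_mi l m)) * of_int (q l + (unit_mi m l + unit_mi l l) - unit_mi m l)))
       = (\<Sum>m\<in>UNIV - {l}. 2 * S$l$m * of_int (q m + 1) * of_int (q l + 1) * phi (\<lambda>j. q j + unit_mi m j + unit_mi l j))"
      by (rule sum.cong) (auto simp: unit_mi_def add.assoc)
    moreover have "(\<lambda>j. q j + (unit_mi l j + unit_mi l j)) = (\<lambda>j. q j + 2 * unit_mi l j)"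
      by (rule ext) simp
    ultimately show ?thesis by (simp add: sum.remove[of UNIV l] unit_mi_def)
  qed
  have e3: "(\<Sum>m\<in>UNIV. phi (\<lambda>j. q j + unit_mi m j) * (2 * X$l * S$l$m * of_int (q m + unit_mi m m)))
     = (\<Sum>m\<in>UNIV. 2 * S$l$m * of_int (q m + 1) * X$l * phi (\<lambda>j. q j + unit_mi m j))"
    by (rule sum.cong) (auto simp: unit_mi_def)
  show ?thesis
    by (simp only: sum.distrib sum_subtractf e1 e2 e3) (simp add: unit_mi_def algebra_simps)
qed

lemma CR_form:
  fixes S :: "real^'n::finite^'n"
  shows "CR S X phi q = - ((\<Sum>l\<in>UNIV. S$l$l * of_int (q l) * phi q)
        + (\<Sum>l\<in>UNIV. \<Sum>m\<in>UNIV - {l}. S$l$m * of_int (q m + 1) * phi (\<lambda>j. q j + unit_mi m j - unit_mi l j)))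
     + ((\<Sum>l\<in>UNIV. \<Sum>m\<in>UNIV. 2 * S$l$m * of_int (q m + 1) * X$l * phi (\<lambda>j. q j + unit_mi m j))
        - (\<Sum>l\<in>UNIV. \<Sum>m\<in>UNIV - {l}. 2 * S$l$m * of_int (q m + 1) * of_int (q l + 1) * phi (\<lambda>j. q j + unit_mi m j + unit_mi l j))
        + (\<Sum>l\<in>UNIV. 2 * (2 - S$l$l) * of_int (q l + 1) * of_int (q l + 2) * phi (\<lambda>j. q j + 2 * unit_mi l j)))"
  unfolding CR_def CR_l by (simp only: sum.distrib sum_subtractf sum_negf)

lemma sum_unit: fixes m :: "'n::finite" shows "(\<Sum>j\<in>UNIV. unit_mi m j) = (1::int)"
  by (simp add: unit_mi_def)

lemma R_big_shift:
  assumes R: "recursion_system S X a p phi" and "(\<Sum>j\<in>UNIV. q j) > int p" "(\<Sum>j\<in>UNIV. w j) \<ge> 0"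
    and "k = (\<lambda>j. q j + w j)"
  shows "phi k = 0"
  by (rule R_big[OF R]) (use assms in \<open>simp add: sum.distrib\<close>)

lemma main2pt:
  fixes S :: "real^'n::finite^'n"
  assumes R: "recursion_system S X a p phi"
  shows "CR S X phi q * Hz q x = -((if (\<forall>j. 0 \<le> q j) \<and> (\<Sum>l\<in>UNIV. q l) \<le> int p
        then a (\<lambda>j. nat (q j)) else 0) * Hz q x) + (if q = (\<lambda>_. 0) then recursion_const S X a phi else 0)"
proof (cases "\<forall>j. 0 \<le> q j")
  case False
  then obtain j where j: "q j < 0" by (meson not_le)
  then have "q \<noteq> (\<lambda>_. 0)" by auto
  moreover have "Hz q x = 0" unfolding Hz_def using False by (simp del: not_all)
  ultimately show ?thesis by simp
next
  case True
  define n where "n = (\<lambda>j. nat (q j))"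
  have qn: "q = (\<lambda>j. int (n j))" using True unfolding n_def by auto
  have sq: "(\<Sum>l\<in>UNIV. q l) = int (\<Sum>l\<in>UNIV. n l)" unfolding qn by simp
  consider "(\<Sum>l\<in>UNIV. n l) = 0" | "1 \<le> (\<Sum>l\<in>UNIV. n l) \<and> (\<Sum>l\<in>UNIV. n l) \<le> p" | "(\<Sum>l\<in>UNIV. n l) > p"
    by linarith
  then show ?thesis
  proof cases
    case 1
    then have n0: "n = (\<lambda>_. 0)" by (auto simp: fun_eq_iff)
    have q0: "q = (\<lambda>_. 0)" unfolding qn n0 by simp
    have H: "Hz q x = 1" unfolding q0 by (simp add: Hz_def hermite_multi_def)
    have cz: "phi (\<lambda>j. unit_mi m j - unit_mi l j) = 0" if "m \<noteq> l" for m l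
      by (rule R_neg[OF R, of _ l]) (use that in \<open>simp add: unit_mi_def\<close>)
    have "CR S X phi q = - a (\<lambda>_. 0) + recursion_const S X a phi"
      unfolding CR_form q0 recursion_const_def
      by (simp add: cz algebra_simps sum_distrib_left)
    then show ?thesis using H q0 by simp
  next
    case 2
    have "(\<Sum>l\<in>UNIV. q l) \<ge> 1" unfolding sq using 2 by linarith
    then have qne: "q \<noteq> (\<lambda>_. 0)" by auto
    note Req = conjunct2[OF R[unfolded recursion_system_def], rule_format, OF 2]
    have CRe: "CR S X phi q = - a n"
      using Req unfolding CR_form qn by (simp add: algebra_simps)
    have cond: "(\<forall>j. 0 \<le> q j) \<and> (\<Sum>l\<in>UNIV. q l) \<le> int p" using True 2 unfolding sq by (simp del: of_nat_sum)
    show ?thesis unfolding if_P[OF cond] if_not_P[OF qne] CRe n_def by simp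
  next
    case 3
    have big: "(\<Sum>j\<in>UNIV. q j) > int p" using 3 unfolding sq by (simp del: of_nat_sum)
    have z1: "phi q = 0" by (rule R_big[OF R big])
    have z2: "phi (\<lambda>j. q j + unit_mi m j - unit_mi l j) = 0" for m l
      by (rule R_big_shift[OF R big, of "\<lambda>j. unit_mi m j - unit_mi l j"])
         (auto simp: sum_subtractf sum_unit)
    have z3: "phi (\<lambda>j. q j + unit_mi m j) = 0" for m
      by (rule R_big_shift[OF R big, of "\<lambda>j. unit_mi m j"]) (auto simp: sum_unit)
    have z4: "phi (\<lambda>j. q j + unit_mi m j + unit_mi l j) = 0" for m l
      by (rule R_big_shift[OF R big, of "\<lambda>j. unit_mi m j + unit_mi l j"])
         (auto simp: sum.distrib sum_unit)
    have z5: "phi (\<lambda>j. q j + 2 * unit_mi l j) = 0" for l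
      by (rule R_big_shift[OF R big, of "\<lambda>j. 2 * unit_mi l j"])
         (auto simp: sum_distrib_left[symmetric] sum_unit)
    have "CR S X phi q = 0" unfolding CR_form by (simp add: z1 z2 z3 z4 z5)
    moreover have "q \<noteq> (\<lambda>_. 0)" using big by auto
    ultimately show ?thesis using big by simp
  qed
qed

lemma main2:
  fixes S :: "real^'n::finite^'n"
  assumes R: "recursion_system S X a p phi"
  shows "(\<Sum>q\<in>Bx p. CR S X phi q * Hz q x) = - herm_expansion a p x + recursion_const S X a phi"
proof -
  have z: "(\<lambda>_. 0) \<in> (Bx p :: ('n \<Rightarrow> int) set)" by (simp add: Bx_def)
  have "- herm_expansion a p x + recursion_const S X a phi =
     (\<Sum>q\<in>Bx p. -((if (\<forall>j. 0 \<le> q j) \<and> (\<Sum>l\<in>UNIV. q l) \<le> int p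
        then a (\<lambda>j. nat (q j)) else 0) * Hz q x) + (if q = (\<lambda>_. 0) then recursion_const S X a phi else 0))"
    by (simp only: herm_Bx sum.distrib sum_negf sum.delta[OF finite_Bx] if_P[OF z])
  then show ?thesis by (simp only: main2pt[OF R])
qed

lemma inv_sym:
  fixes Sig :: "real^'n::finite^'n"
  assumes sym: "transpose Sig = Sig" and pd: "\<forall>v. v \<noteq> 0 \<longrightarrow> v \<bullet> (Sig *v v) > 0"
  shows "transpose (matrix_inv Sig) = matrix_inv Sig"
proof -
  have "inj ((*v) Sig)"
  proof (rule injI)
    fix u w assume "Sig *v u = Sig *v w"
    then have "Sig *v (u - w) = 0" by (simp add: matrix_vector_mult_diff_distrib)
    then show "u = w" using pd[rule_format, of "u - w"] by auto
  qed
  then have "invertible Sig"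
    using matrix_left_invertible_injective invertible_left_inverse by blast
  then have "\<exists>A'. Sig ** A' = mat 1 \<and> A' ** Sig = mat 1" unfolding invertible_def by blast
  then have inv: "Sig ** matrix_inv Sig = mat 1 \<and> matrix_inv Sig ** Sig = mat 1"
    unfolding matrix_inv_def by (rule someI_ex)
  define B where "B = matrix_inv Sig"
  have "transpose B ** Sig = mat 1"
    using inv sym unfolding B_def by (metis matrix_transpose_mul transpose_mat)
  then have "transpose B = transpose B ** (Sig ** B)" using inv unfolding B_def by simp
  also have "\<dots> = B" by (simp add: matrix_mul_assoc \<open>transpose B ** Sig = mat 1\<close>)
  finally show ?thesis unfolding B_def .
qed

lemma quad_line:
  fixes S :: "real^'n::finite^'n"
  assumes sym: "transpose S = S"
  shows "((\<lambda>t. (v + t *\<^sub>R axis i 1) \<bullet> (S *v (v + t *\<^sub>R axis i 1))) has_real_derivative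
           2 * (S *v v) $ i) (at 0)"
proof -
  define e :: "real^'n" where "e = axis i 1"
  have a: "v \<bullet> (S *v e) = (S *v v) $ i"
  proof -
    have "v \<bullet> (S *v e) = (\<Sum>j\<in>UNIV. v $ j * S $ j $ i)"
      unfolding e_def inner_vec_def matrix_vector_mult_def
      by (simp add: axis_def if_distrib cong: if_cong)
    also have "\<dots> = (\<Sum>j\<in>UNIV. S $ i $ j * v $ j)"
    proof (rule sum.cong[OF refl])
      fix j
      have "S $ j $ i = transpose S $ i $ j" by (simp add: transpose_def)
      then show "v $ j * S $ j $ i = S $ i $ j * v $ j" using sym by simp
    qed
    finally show ?thesis by (simp add: matrix_vector_mult_def)
  qed
  have b: "e \<bullet> (S *v v) = (S *v v) $ i"
    unfolding e_def by (simp add: inner_axis')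
  have eq: "(\<lambda>t. (v + t *\<^sub>R e) \<bullet> (S *v (v + t *\<^sub>R e))) =
      (\<lambda>t. v \<bullet> (S *v v) + t * (2 * (S *v v) $ i) + t^2 * (e \<bullet> (S *v e)))"
    by (rule ext) (simp add: algebra_simps inner_add_left inner_add_right a b power2_eq_square)
  show ?thesis unfolding e_def[symmetric] eq
    by (auto intro!: derivative_eq_intros)
qed

lemma gauss_line:
  fixes Sig :: "real^'n::finite^'n"
  assumes sym: "transpose (matrix_inv Sig) = matrix_inv Sig"
  shows "((\<lambda>t. gaussian_density X Sig (x + t *\<^sub>R axis i 1)) has_real_derivative
           - ((matrix_inv Sig *v (x - X)) $ i) * gaussian_density X Sig x) (at 0)"
proof -
  define c where "c = sqrt ((2 * pi) ^ CARD('n) * det Sig)"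
  define v where "v = x - X"
  have e: "(\<lambda>t. gaussian_density X Sig (x + t *\<^sub>R axis i 1)) =
     (\<lambda>t. exp (- (1/2) * ((v + t *\<^sub>R axis i 1) \<bullet> (matrix_inv Sig *v (v + t *\<^sub>R axis i 1)))) * (1 / c))"
    unfolding gaussian_density_def c_def v_def by (rule ext) (simp add: algebra_simps)
  have g: "gaussian_density X Sig x = exp (- (1/2) * (v \<bullet> (matrix_inv Sig *v v))) * (1 / c)"
    unfolding gaussian_density_def c_def v_def by simp
  show ?thesis unfolding e g v_def[symmetric]
    by (rule derivative_eq_intros quad_line[OF sym] refl)+ (simp add: algebra_simps)
qed

lemma phiexp_lem:
  assumes R: "recursion_system S X a p phi"
  shows "herm_expansion (\<lambda>k. phi (\<lambda>j. int (k j))) p = (\<lambda>y. \<Sum>k\<in>Bx p. phi k * Hz k y)"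
proof
  fix y
  show "herm_expansion (\<lambda>k. phi (\<lambda>j. int (k j))) p y = (\<Sum>k\<in>Bx p. phi k * Hz k y)"
    unfolding herm_Bx
  proof (rule sum.cong[OF refl])
    fix k :: "'a \<Rightarrow> int"
    show "(if (\<forall>j. 0 \<le> k j) \<and> (\<Sum>l\<in>UNIV. k l) \<le> int p then phi (\<lambda>j. int (nat (k j))) else 0) * Hz k y
        = phi k * Hz k y"
    proof (cases "\<forall>j. 0 \<le> k j")
      case True
      then have "(\<lambda>j. int (nat (k j))) = k" by auto
      then show ?thesis using True R_big[OF R, of k] by auto
    next
      case False then show ?thesis unfolding Hz_def by (simp del: not_all)
    qed
  qed
qed

lemma d1_lem:
  assumes R: "recursion_system S X a p phi"
  shows "partial_deriv m (herm_expansion (\<lambda>k. phi (\<lambda>j. int (k j))) p) =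
     (\<lambda>y. \<Sum>k\<in>Bx p. (phi k * (2 * of_int (k m))) * Hz (\<lambda>j. k j - unit_mi m j) y)"
  unfolding phiexp_lem[OF R] using pd_sum[where B="Bx p" and c=phi and \<sigma>="\<lambda>k. k"] by (intro ext) simp

theorem mainTheorem2:
  fixes X :: "real^'n::finite"
    and Sig :: "real^'n^'n"
    and a :: "('n \<Rightarrow> nat) \<Rightarrow> real"
    and phi :: "('n \<Rightarrow> int) \<Rightarrow> real"
    and p :: nat
  assumes "p \<ge> 1"
    and "transpose Sig = Sig"
    and "\<forall>v. v \<noteq> 0 \<longrightarrow> v \<bullet> (Sig *v v) > 0"
    and "recursion_system (matrix_inv Sig) X a p phi"
  shows "\<forall>x::real^'n.
     - (\<Sum>l\<in>UNIV. \<Sum>m\<in>UNIV. (x$l - X$l) * (matrix_inv Sig)$l$m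
          * partial_deriv m (herm_expansion (\<lambda>k. phi (\<lambda>j. int (k j))) p) x)
     + laplacian (herm_expansion (\<lambda>k. phi (\<lambda>j. int (k j))) p) x
     = - herm_expansion a p x + recursion_const (matrix_inv Sig) X a phi
   \<and> (\<Sum>i\<in>UNIV. partial_deriv i (\<lambda>y. gaussian_density X Sig y
          * partial_deriv i (herm_expansion (\<lambda>k. phi (\<lambda>j. int (k j))) p) y) x)
     = (- herm_expansion a p x + recursion_const (matrix_inv Sig) X a phi)
          * gaussian_density X Sig x"
proof
  fix x :: "real^'n"
  define S where "S = matrix_inv Sig"
  define \<phi> where "\<phi> = herm_expansion (\<lambda>k. phi (\<lambda>j. int (k j))) p"
  define N where "N = gaussian_density X Sig"
  have R: "recursion_system S X a p phi" using assms(4) unfolding S_def .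
  have symS: "transpose S = S" unfolding S_def by (rule inv_sym[OF assms(2,3)])
  have P1: "- (\<Sum>l\<in>UNIV. \<Sum>m\<in>UNIV. (x$l - X$l) * S$l$m * partial_deriv m \<phi> x) + laplacian \<phi> x
     = - herm_expansion a p x + recursion_const S X a phi"
    unfolding \<phi>_def using main1[OF R, of x] main2[OF R, of x, unfolded CR_def] by (rule trans)
  have sv: "(S *v (x - X)) $ m = (\<Sum>l\<in>UNIV. (x$l - X$l) * S$l$m)" for m
  proof -
    have "S $ m $ l = S $ l $ m" for l
    proof -
      have "S $ m $ l = transpose S $ m $ l" using symS by simp
      also have "\<dots> = S $ l $ m" by (simp add: transpose_def)
      finally show ?thesis .
    qed
    then show ?thesis by (simp add: matrix_vector_mult_def mult.commute)
  qed
  have P2i: "partial_deriv i (\<lambda>y. N y * partial_deriv i \<phi> y) x =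
      N x * (- ((S *v (x - X)) $ i) * partial_deriv i \<phi> x + partial_deriv i (partial_deriv i \<phi>) x)" for i
  proof -
    define g where "g = partial_deriv i \<phi>"
    have gl: "((\<lambda>t. g (x + t *\<^sub>R axis i 1)) has_real_derivative partial_deriv i g x) (at 0)"
    proof -
      have ge: "g = (\<lambda>y. \<Sum>k\<in>Bx p. (phi k * (2 * of_int (k i))) * Hz (\<lambda>j. k j - unit_mi i j) y)"
        unfolding g_def \<phi>_def by (rule d1_lem[OF R])
      show ?thesis unfolding ge pd_sum by (rule line_deriv_sum)
    qed
    have Nl: "((\<lambda>t. N (x + t *\<^sub>R axis i 1)) has_real_derivative - ((S *v (x - X)) $ i) * N x) (at 0)"
      unfolding N_def S_def by (rule gauss_line) (use symS in \<open>simp add: S_def\<close>)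
    have "((\<lambda>t. N (x + t *\<^sub>R axis i 1) * g (x + t *\<^sub>R axis i 1)) has_real_derivative
        - ((S *v (x - X)) $ i) * N x * g x + partial_deriv i g x * N x) (at 0)"
      using DERIV_mult[OF Nl gl] by simp
    then have "partial_deriv i (\<lambda>y. N y * g y) x = - ((S *v (x - X)) $ i) * N x * g x + partial_deriv i g x * N x"
      unfolding partial_deriv_def by (rule DERIV_imp_deriv)
    then show ?thesis unfolding g_def by (simp add: algebra_simps)
  qed
  have "(\<Sum>i\<in>UNIV. partial_deriv i (\<lambda>y. N y * partial_deriv i \<phi> y) x)
      = N x * (- (\<Sum>i\<in>UNIV. (S *v (x - X)) $ i * partial_deriv i \<phi> x) + laplacian \<phi> x)"
  proof -
    define w where "w = S *v (x - X)"
    have "(\<Sum>i\<in>UNIV. partial_deriv i (\<lambda>y. N y * partial_deriv i \<phi> y) x)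
       = (\<Sum>i\<in>UNIV. N x * (- (w $ i) * partial_deriv i \<phi> x + partial_deriv i (partial_deriv i \<phi>) x))"
      unfolding w_def by (simp only: P2i)
    also have "\<dots> = N x * (- (\<Sum>i\<in>UNIV. w $ i * partial_deriv i \<phi> x) + (\<Sum>i\<in>UNIV. partial_deriv i (partial_deriv i \<phi>) x))"
      by (simp only: distrib_left mult_minus_right mult_minus_left sum.distrib sum_negf sum_distrib_left)
    finally show ?thesis unfolding w_def laplacian_def .
  qed
  also have "(\<Sum>i\<in>UNIV. (S *v (x - X)) $ i * partial_deriv i \<phi> x)
      = (\<Sum>l\<in>UNIV. \<Sum>m\<in>UNIV. (x$l - X$l) * S$l$m * partial_deriv m \<phi> x)"
    unfolding sv sum_distrib_right by (rule sum.swap)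
  finally have P2: "(\<Sum>i\<in>UNIV. partial_deriv i (\<lambda>y. N y * partial_deriv i \<phi> y) x)
      = (- herm_expansion a p x + recursion_const S X a phi) * N x"
    unfolding P1 by simp
  show "- (\<Sum>l\<in>UNIV. \<Sum>m\<in>UNIV. (x$l - X$l) * (matrix_inv Sig)$l$m
          * partial_deriv m (herm_expansion (\<lambda>k. phi (\<lambda>j. int (k j))) p) x)
     + laplacian (herm_expansion (\<lambda>k. phi (\<lambda>j. int (k j))) p) x
     = - herm_expansion a p x + recursion_const (matrix_inv Sig) X a phi
   \<and> (\<Sum>i\<in>UNIV. partial_deriv i (\<lambda>y. gaussian_density X Sig y
          * partial_deriv i (herm_expansion (\<lambda>k. phi (\<lambda>j. int (k j))) p) y) x)
     = (- herm_expansion a p x + recursion_const (matrix_inv Sig) X a phi)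
          * gaussian_density X Sig x"
    using P1 P2 unfolding S_def \<phi>_def N_def by simp
qed

end
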